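(* Fix the domain $[n]^d$ and a product distribution $\mathcal{D}$ on $[n]^d$. Suppose there is a $Q$-query tester for a bounded-derivative property $\mathcal{P}(\mathcal{B})$ with respect to $\mathcal{D}$ with proximity parameter $\varepsilon$. Then there is a $(Q+10/\varepsilon)$-query tester for monotonicity of functions $f:[n]^d\to\mathbb{N}$ with respect to $\mathcal{D}$ with proximity parameter $2\varepsilon$.
   Context: A bounding family is a tuple of $2d$ functions $l_1,u_1,\dots,l_d,u_d:[n-1]\to\mathbb{R}$ with $l_r(y)<u_r(y)$; the bounded-derivative property $\mathcal{P}(\mathcal{B})$ is the set of $f:[n]^d\to\mathbb{R}$ with $l_r(x_r)\le f(x+\mathbf{e}_r)-f(x)\le u_r(x_r)$ for all $r$ and $x$ with $x_r<n$. $f$ is monotone if $f(x)\le f(y)$ whenever $x\le y$ coordinatewise. A tester for a property $\mathcal{P}$ w.r.t. $\mathcal{D}$ with proximity parameter $\varepsilon$ has query access to $f$, accepts with probability $>2/3$ if $f\in\mathcal{P}$, and rejects with probability $>2/3$ if $\inf_{g\in\mathcal{P}}\Pr_{x\sim\mathcal{D}}[f(x)\ne g(x)]>\varepsilon$. *)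

theory Defs
  imports "HOL-Probability.Probability"
begin

text \<open>Points of the grid [n]^d are functions x :: nat => nat with x i in {1..n}
  for coordinates i < d and x i = 0 for i >= d (coordinates are indexed 0..d-1).\<close>

definition grid :: "nat \<Rightarrow> nat \<Rightarrow> (nat \<Rightarrow> nat) set" where
  "grid n d = {x. (\<forall>i<d. x i \<in> {1..n}) \<and> (\<forall>i. d \<le> i \<longrightarrow> x i = 0)}"

definition product_dist :: "nat \<Rightarrow> (nat \<Rightarrow> nat pmf) \<Rightarrow> (nat \<Rightarrow> nat) pmf" where
  "product_dist d Ds = Pi_pmf {..<d} 0 Ds"

text \<open>Deterministic adaptive query algorithms: decision trees that query a point
  and branch on the returned value; leaves output accept (True) / reject (False).\<close>

datatype ('x, 'v) qtree = Leaf bool | Query 'x "'v \<Rightarrow> ('x, 'v) qtree"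

primrec run :: "('x, 'v) qtree \<Rightarrow> ('x \<Rightarrow> 'v) \<Rightarrow> bool" where
  "run (Leaf b) f = b"
| "run (Query x k) f = run (k (f x)) f"

primrec num_queries :: "('x, 'v) qtree \<Rightarrow> ('x \<Rightarrow> 'v) \<Rightarrow> nat" where
  "num_queries (Leaf b) f = 0"
| "num_queries (Query x k) f = Suc (num_queries (k (f x)) f)"

inductive queries_in :: "'x set \<Rightarrow> ('x, 'v) qtree \<Rightarrow> bool" for G where
  "queries_in G (Leaf b)"
| "x \<in> G \<Longrightarrow> (\<And>v. queries_in G (k v)) \<Longrightarrow> queries_in G (Query x k)"

definition dist_to :: "'x pmf \<Rightarrow> ('x \<Rightarrow> 'v) \<Rightarrow> ('x \<Rightarrow> 'v) set \<Rightarrow> real" where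
  "dist_to D f P = (INF g\<in>P. measure_pmf.prob D {x. f x \<noteq> g x})"

definition is_tester ::
  "('x, 'v) qtree pmf \<Rightarrow> real \<Rightarrow> 'x set \<Rightarrow> ('x \<Rightarrow> 'v) set \<Rightarrow> 'x pmf \<Rightarrow> real \<Rightarrow> bool" where
  "is_tester T q G P D \<epsilon> \<longleftrightarrow>
     (\<forall>t\<in>set_pmf T. queries_in G t \<and> (\<forall>f. real (num_queries t f) \<le> q)) \<and>
     (\<forall>f\<in>P. measure_pmf.prob T {t. run t f} > 2/3) \<and>
     (\<forall>f. dist_to D f P > \<epsilon> \<longrightarrow> measure_pmf.prob T {t. \<not> run t f} > 2/3)"

definition bounding_family :: "nat \<Rightarrow> nat \<Rightarrow> (nat \<Rightarrow> nat \<Rightarrow> real) \<Rightarrow> (nat \<Rightarrow> nat \<Rightarrow> real) \<Rightarrow> bool" where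
  "bounding_family n d l u \<longleftrightarrow> (\<forall>r<d. \<forall>y\<in>{1..n-1}. l r y < u r y)"

definition bounded_derivative_property ::
  "nat \<Rightarrow> nat \<Rightarrow> (nat \<Rightarrow> nat \<Rightarrow> real) \<Rightarrow> (nat \<Rightarrow> nat \<Rightarrow> real) \<Rightarrow> ((nat \<Rightarrow> nat) \<Rightarrow> real) set" where
  "bounded_derivative_property n d l u =
     {f. \<forall>r<d. \<forall>x\<in>grid n d. x r < n \<longrightarrow>
          l r (x r) \<le> f (x(r := x r + 1)) - f x \<and> f (x(r := x r + 1)) - f x \<le> u r (x r)}"

definition monotone_fns :: "nat \<Rightarrow> nat \<Rightarrow> ((nat \<Rightarrow> nat) \<Rightarrow> nat) set" where
  "monotone_fns n d =
     {f. \<forall>x\<in>grid n d. \<forall>y\<in>grid n d. (\<forall>i<d. x i \<le> y i) \<longrightarrow> f x \<le> f y}"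

end

theory Submission
  imports Defs
begin

primrec trq :: "('x \<Rightarrow> nat \<Rightarrow> real) \<Rightarrow> ('x, real) qtree \<Rightarrow> ('x, nat) qtree" where
  "trq c (Leaf b) = Leaf b"
| "trq c (Query x k) = Query x (\<lambda>v. trq c (k (c x v)))"

lemma run_trq: "run (trq c t) f = run t (\<lambda>x. c x (f x))"
  by (induction t) auto

lemma nq_trq: "num_queries (trq c t) f = num_queries t (\<lambda>x. c x (f x))"
  by (induction t) auto

lemma qi_trq: "queries_in G t \<Longrightarrow> queries_in G (trq c t)"
  by (induction rule: queries_in.induct) (auto intro: queries_in.intros)

lemma grid_finite: "finite (grid n d)"
proof -
  have "inj_on (\<lambda>x. map x [0..<d]) (grid n d)"
  proof (rule inj_onI)
    fix x y assume x: "x \<in> grid n d" and y: "y \<in> grid n d" and e: "map x [0..<d] = map y [0..<d]"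
    show "x = y"
    proof
      fix i show "x i = y i"
      proof (cases "i < d")
        case True then show ?thesis using e by (metis map_eq_conv atLeastLessThan_iff set_upt zero_le)
      next
        case False then show ?thesis using x y by (auto simp: grid_def)
      qed
    qed
  qed
  moreover have "(\<lambda>x. map x [0..<d]) ` grid n d \<subseteq> {xs. set xs \<subseteq> {0..n} \<and> length xs = d}"
    by (auto simp: grid_def)
  moreover have "finite {xs. set xs \<subseteq> {0..n} \<and> length xs = d}"
    by (rule finite_lists_length_eq) simp
  ultimately show ?thesis by (metis finite_imageD finite_subset)
qed

lemma grid_step: "x \<in> grid n d \<Longrightarrow> r < d \<Longrightarrow> x r < n \<Longrightarrow> x(r := x r + 1) \<in> grid n d"
  by (auto simp: grid_def)

lemma base_step:
  assumes "x \<in> grid n d" "r < d" "x r < n"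
  shows "(\<Sum>r'<d. \<Sum>y\<in>{1..<(x(r := x r + 1)) r'}. l r' y) = (\<Sum>r'<d. \<Sum>y\<in>{1..<x r'}. l r' y) + (l r (x r) :: real)"
proof -
  have xr: "1 \<le> x r" using assms by (auto simp: grid_def)
  have "(\<Sum>r'<d. \<Sum>y\<in>{1..<(x(r := x r + 1)) r'}. l r' y) =
        (\<Sum>y\<in>{1..<x r + 1}. l r y) + (\<Sum>r'\<in>{..<d}-{r}. \<Sum>y\<in>{1..<(x(r := x r + 1)) r'}. l r' y)"
    using assms by (subst sum.remove[of _ r]) auto
  also have "(\<Sum>r'\<in>{..<d}-{r}. \<Sum>y\<in>{1..<(x(r := x r + 1)) r'}. l r' y) = (\<Sum>r'\<in>{..<d}-{r}. \<Sum>y\<in>{1..<x r'}. l r' y)"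
    by (rule sum.cong) auto
  also have "(\<Sum>y\<in>{1..<x r + 1}. l r y) = (\<Sum>y\<in>{1..<x r}. l r y) + l r (x r)"
    using xr by (simp add: sum.atLeastLessThan_Suc)
  also have "(\<Sum>r'<d. \<Sum>y\<in>{1..<x r'}. l r' y) = (\<Sum>y\<in>{1..<x r}. l r y) + (\<Sum>r'\<in>{..<d}-{r}. \<Sum>y\<in>{1..<x r'}. l r' y)"
    using assms by (subst sum.remove[of _ r]) auto
  ultimately show ?thesis by simp
qed

lemma grid_mono:
  fixes h :: "(nat \<Rightarrow> nat) \<Rightarrow> real"
  assumes step: "\<And>r x. r < d \<Longrightarrow> x \<in> grid n d \<Longrightarrow> x r < n \<Longrightarrow> h x \<le> h (x(r := x r + 1))"
  shows "x \<in> grid n d \<Longrightarrow> y \<in> grid n d \<Longrightarrow> \<forall>i<d. y i \<le> x i \<Longrightarrow> h y \<le> h x"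
proof (induction "\<Sum>i<d. x i - y i" arbitrary: y rule: less_induct)
  case less
  show ?case
  proof (cases "\<exists>i<d. y i < x i")
    case False
    then have "y = x" using less.prems by (auto simp: grid_def fun_eq_iff) (metis le_less not_le)
    then show ?thesis by simp
  next
    case True
    then obtain i where i: "i < d" "y i < x i" by blast
    have yn: "y i < n" using i less.prems by (auto simp: grid_def)
    let ?y = "y(i := y i + 1)"
    have g: "?y \<in> grid n d" using grid_step[OF less.prems(2) i(1) yn] .
    have le: "\<forall>j<d. ?y j \<le> x j" using less.prems i by auto
    have "(\<Sum>j<d. x j - ?y j) < (\<Sum>j<d. x j - y j)"
    proof (rule sum_strict_mono_ex1)
      show "\<forall>j\<in>{..<d}. x j - ?y j \<le> x j - y j" by auto
      show "\<exists>j\<in>{..<d}. x j - ?y j < x j - y j" using i by (intro bexI[of _ i]) auto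
    qed auto
    then have "h ?y \<le> h x" by (rule less.hyps[OF _ less.prems(1) g le])
    moreover have "h y \<le> h ?y" using step[OF i(1) less.prems(2) yn] .
    ultimately show ?thesis by simp
  qed
qed


theorem theorem5p4:
  fixes n d Q :: nat and \<epsilon> :: real and Ds :: "nat \<Rightarrow> nat pmf"
    and l u :: "nat \<Rightarrow> nat \<Rightarrow> real"
    and T :: "(nat \<Rightarrow> nat, real) qtree pmf"
  assumes "0 < \<epsilon>"
    and "\<forall>i<d. set_pmf (Ds i) \<subseteq> {1..n}"
    and "bounding_family n d l u"
    and "is_tester T (real Q) (grid n d) (bounded_derivative_property n d l u)
           (product_dist d Ds) \<epsilon>"
  shows "\<exists>T' :: (nat \<Rightarrow> nat, nat) qtree pmf.
           is_tester T' (real Q + 10 / \<epsilon>) (grid n d) (monotone_fns n d)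
             (product_dist d Ds) (2 * \<epsilon>)"
proof -
  note eps = assms(1) and Dsupp = assms(2) and bf = assms(3) and tst = assms(4)
  define D where "D = product_dist d Ds"
  define G where "G = grid n d"
  define P where "P = bounded_derivative_property n d l u"
  define M where "M = monotone_fns n d"
  define S where "S = (\<lambda>(r,y). u r y - l r y) ` ({..<d} \<times> {1..n-1})"
  define \<delta> where "\<delta> = Min (insert 1 S)"
  have finS: "finite S" unfolding S_def by auto
  have Spos: "\<forall>s\<in>S. 0 < s" using bf unfolding S_def bounding_family_def by auto
  have dpos: "0 < \<delta>" unfolding \<delta>_def using finS Spos by (subst Min_gr_iff) auto
  have dle: "\<delta> \<le> u r y - l r y" if "r < d" "y \<in> {1..n-1}" for r y
  proof -
    have "u r y - l r y \<in> S" using that unfolding S_def by force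
    then show ?thesis unfolding \<delta>_def using finS by (intro Min_le) auto
  qed
  define base :: "(nat \<Rightarrow> nat) \<Rightarrow> real" where "base = (\<lambda>x. \<Sum>r<d. \<Sum>y\<in>{1..<x r}. l r y)"
  define phi :: "nat \<Rightarrow> real" where "phi = (\<lambda>v. \<delta> - \<delta> / (real v + 1))"
  define c where "c = (\<lambda>x v. base x + phi v)"
  define T' where "T' = map_pmf (trq c) T"
  have phi_mono: "phi a \<le> phi b \<longleftrightarrow> a \<le> b" for a b
    using dpos unfolding phi_def by (simp add: divide_le_cancel frac_le_eq field_simps)
  have phi_diff: "phi b - phi a < \<delta>" if "a \<le> b" for a b
  proof -
    have "\<delta> / (real a + 1) \<le> \<delta>" using dpos by (simp add: field_simps)
    moreover have "0 < \<delta> / (real b + 1)" using dpos by simp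
    ultimately show ?thesis unfolding phi_def by simp
  qed
  have DG: "set_pmf D \<subseteq> G"
  proof
    fix x assume "x \<in> set_pmf D"
    then have "x \<in> PiE_dflt {..<d} 0 (set_pmf \<circ> Ds)"
      unfolding D_def product_dist_def using set_Pi_pmf[of "{..<d}" 0 Ds] by simp
    then show "x \<in> G" using Dsupp unfolding PiE_dflt_def G_def grid_def by fastforce
  qed
  have key1: "(\<lambda>x. c x (f x)) \<in> P" if "f \<in> M" for f
    unfolding P_def bounded_derivative_property_def
  proof (intro CollectI allI impI ballI)
    fix r x assume r: "r < d" and x: "x \<in> grid n d" and xr: "x r < n"
    let ?x = "x(r := x r + 1)"
    have g: "?x \<in> grid n d" using grid_step[OF x r xr] .
    have "f x \<le> f ?x" using that x g unfolding M_def monotone_fns_def by auto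
    then have p1: "0 \<le> phi (f ?x) - phi (f x)" and p2: "phi (f ?x) - phi (f x) < \<delta>"
      using phi_mono phi_diff by auto
    have bs: "base ?x = base x + l r (x r)" unfolding base_def using base_step[OF x r xr] by simp
    have xr1: "x r \<in> {1..n-1}" using x r xr by (auto simp: grid_def)
    have "c ?x (f ?x) - c x (f x) = l r (x r) + (phi (f ?x) - phi (f x))"
      unfolding c_def bs by simp
    then show "l r (x r) \<le> c ?x (f ?x) - c x (f x) \<and> c ?x (f ?x) - c x (f x) \<le> u r (x r)"
      using p1 p2 dle[OF r xr1] by simp
  qed
  have Pne: "base \<in> P"
    unfolding P_def bounded_derivative_property_def
  proof (intro CollectI allI impI ballI)
    fix r x assume r: "r < d" and x: "x \<in> grid n d" and xr: "x r < n"
    have bs: "base (x(r := x r + 1)) = base x + l r (x r)" unfolding base_def using base_step[OF x r xr] by simp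
    have xr1: "x r \<in> {1..n-1}" using x r xr by (auto simp: grid_def)
    show "l r (x r) \<le> base (x(r := x r + 1)) - base x \<and> base (x(r := x r + 1)) - base x \<le> u r (x r)"
      using bs dle[OF r xr1] dpos by simp
  qed
  have key2: "dist_to D f M \<le> dist_to D (\<lambda>x. c x (f x)) P" for f
    unfolding dist_to_def
  proof (rule cINF_greatest)
    show "P \<noteq> {}" using Pne by auto
    fix g' assume g': "g' \<in> P"
    define h where "h = (\<lambda>x. g' x - base x)"
    have hstep: "h x \<le> h (x(r := x r + 1))" if "r < d" "x \<in> grid n d" "x r < n" for r x
    proof -
      have "base (x(r := x r + 1)) = base x + l r (x r)" unfolding base_def using base_step[OF that(2,1,3)] by simp
      moreover have "l r (x r) \<le> g' (x(r := x r + 1)) - g' x"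
        using g' that unfolding P_def bounded_derivative_property_def by blast
      ultimately show ?thesis unfolding h_def by simp
    qed
    have hmono: "h y \<le> h x" if "x \<in> G" "y \<in> G" "\<forall>i<d. y i \<le> x i" for x y
      using grid_mono[of d n h, OF hstep] that unfolding G_def by blast
    define A where "A = (\<lambda>x. {y \<in> G. (\<forall>i<d. y i \<le> x i) \<and> c y (f y) = g' y})"
    define f' where "f' = (\<lambda>x. Max (insert 0 (f ` A x)))"
    have finA: "finite (A x)" for x unfolding A_def G_def using grid_finite by auto
    have f'M: "f' \<in> M" unfolding M_def monotone_fns_def
    proof (intro CollectI ballI impI)
      fix x y assume "x \<in> grid n d" "y \<in> grid n d" and le: "\<forall>i<d. x i \<le> y i"
      have "A x \<subseteq> A y" unfolding A_def using le by (auto intro: order_trans)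
      then show "f' x \<le> f' y" unfolding f'_def using finA
        by (intro Max_mono) auto
    qed
    have agree: "f' x = f x" if "x \<in> G" "c x (f x) = g' x" for x
    proof -
      have xA: "x \<in> A x" using that unfolding A_def by auto
      have "f z \<le> f x" if "z \<in> A x" for z
      proof -
        have z: "z \<in> G" "\<forall>i<d. z i \<le> x i" "c z (f z) = g' z" using that unfolding A_def by auto
        have "h z \<le> h x" using hmono[OF \<open>x \<in> G\<close> z(1,2)] .
        then have "phi (f z) \<le> phi (f x)" using z(3) \<open>c x (f x) = g' x\<close>
          unfolding h_def c_def by simp
        then show ?thesis using phi_mono by simp
      qed
      then show ?thesis unfolding f'_def using finA xA
        by (intro antisym Max.boundedI Max_ge) auto
    qed
    have "dist_to D f M \<le> measure_pmf.prob D {x. f x \<noteq> f' x}"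
      unfolding dist_to_def by (rule cINF_lower[OF _ f'M]) (auto intro: bdd_belowI[of _ 0])
    also have "\<dots> \<le> measure_pmf.prob D {x. c x (f x) \<noteq> g' x}"
    proof (rule measure_pmf.finite_measure_mono_AE)
      show "AE x in measure_pmf D. x \<in> {x. f x \<noteq> f' x} \<longrightarrow> x \<in> {x. c x (f x) \<noteq> g' x}"
        unfolding AE_measure_pmf_iff using DG agree by fastforce
    qed auto
    finally show "(INF g\<in>M. measure_pmf.prob D {x. f x \<noteq> g x}) \<le> measure_pmf.prob D {x. c x (f x) \<noteq> g' x}"
      unfolding dist_to_def .
  qed
  have "is_tester T' (real Q + 10 / \<epsilon>) G M D (2 * \<epsilon>)"
    unfolding is_tester_def
  proof (intro conjI ballI allI impI)
    fix t assume "t \<in> set_pmf T'"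
    then obtain t0 where t0: "t0 \<in> set_pmf T" "t = trq c t0" unfolding T'_def by auto
    show "queries_in G t" using t0 tst qi_trq unfolding is_tester_def G_def by blast
    fix f
    have "real (num_queries t0 (\<lambda>x. c x (f x))) \<le> real Q" using t0 tst unfolding is_tester_def by blast
    moreover have "0 \<le> 10 / \<epsilon>" using eps by simp
    ultimately show "real (num_queries t f) \<le> real Q + 10 / \<epsilon>" unfolding t0(2) nq_trq by linarith
  next
    fix f assume "f \<in> M"
    then have "measure_pmf.prob T {t. run t (\<lambda>x. c x (f x))} > 2/3"
      using key1 tst unfolding is_tester_def P_def by blast
    then show "measure_pmf.prob T' {t. run t f} > 2/3"
      unfolding T'_def by (simp add: vimage_def run_trq)
  next
    fix f assume "dist_to D f M > 2 * \<epsilon>"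
    then have "dist_to D (\<lambda>x. c x (f x)) P > \<epsilon>" using key2[of f] eps by simp
    then have "measure_pmf.prob T {t. \<not> run t (\<lambda>x. c x (f x))} > 2/3"
      using tst unfolding is_tester_def P_def D_def by blast
    then show "measure_pmf.prob T' {t. \<not> run t f} > 2/3"
      unfolding T'_def by (simp add: vimage_def run_trq)
  qed
  then show ?thesis unfolding G_def M_def D_def by blast
qed

end
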